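(* Let $\mathcal{M}$ be a finite (or countable) set of models with target probability mass function $p(\cdot\mid\boldsymbol{y})$ on $\mathcal{M}$, and let $q_S(\mathcal{S}\mid\mathfrak{m})$, $q_o(\mathfrak{m}_k\mid\mathcal{S},\mathfrak{m})$, $q_r(\mathfrak{m}'\mid\mathcal{S},\mathfrak{m}_k)$ be probability mass functions (over populations, models and models, respectively). Assume $\mathfrak{m}\sim p(\cdot\mid\boldsymbol{y})$, generate $\mathcal{S}'\sim q_S(\cdot\mid\mathfrak{m})$, $\mathfrak{m}_k'\sim q_o(\cdot\mid\mathcal{S}',\mathfrak{m})$, $\mathfrak{m}'\sim q_r(\cdot\mid\mathcal{S}',\mathfrak{m}_k')$, and backward auxiliary variables $\mathcal{S}\sim q_S(\cdot\mid\mathfrak{m}')$, $\mathfrak{m}_k\sim q_o(\cdot\mid\mathcal{S},\mathfrak{m}')$. Accept $\mathfrak{m}'$ if both (1) $\mathfrak{m}'$ is preliminarily accepted with probability $\min\{1,p(\mathfrak{m}'\mid\boldsymbol{y})/p(\mathfrak{m}\mid\boldsymbol{y})\}$, and (2) it is then finally accepted with probability $\min\{1,q_r(\mathfrak{m}\mid\mathcal{S},\mathfrak{m}_k)/q_r(\mathfrak{m}'\mid\mathcal{S}',\mathfrak{m}_k')\}$; let $\mathfrak{m}^*=\mathfrak{m}'$ if accepted and $\mathfrak{m}^*=\mathfrak{m}$ otherwise. Then $\mathfrak{m}^*\sim p(\cdot\mid\boldsymbol{y})$.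
   Context: This is the delayed-acceptance version of the reversible genetically modified mode jumping MCMC (RGMJMCMC) step: from the current model a new population of features $\mathcal{S}'$ is proposed, local search within it gives $\mathfrak{m}_k'$, randomization gives the proposal $\mathfrak{m}'$, and backward auxiliary variables $(\mathcal{S},\mathfrak{m}_k)$ are generated from $\mathfrak{m}'$ (only needed if the preliminary acceptance occurs). $p(\mathfrak{m}\mid\boldsymbol{y})$ is the posterior model probability. *)

theory Defs
  imports "HOL-Probability.Probability"
begin

definition da_rgmjmcmc_step ::
  "'m pmf \<Rightarrow> ('m \<Rightarrow> 's pmf) \<Rightarrow> ('s \<Rightarrow> 'm \<Rightarrow> 'm pmf) \<Rightarrow> ('s \<Rightarrow> 'm \<Rightarrow> 'm pmf)
    \<Rightarrow> 'm \<Rightarrow> 'm pmf" where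
  "da_rgmjmcmc_step p qS qo qr m =
     bind_pmf (qS m) (\<lambda>S'.
     bind_pmf (qo S' m) (\<lambda>mk'.
     bind_pmf (qr S' mk') (\<lambda>m'.
     bind_pmf (bernoulli_pmf (min 1 (pmf p m' / pmf p m))) (\<lambda>a1.
       if a1 then
         bind_pmf (qS m') (\<lambda>S.
         bind_pmf (qo S m') (\<lambda>mk.
         bind_pmf (bernoulli_pmf (min 1 (pmf (qr S mk) m / pmf (qr S' mk') m'))) (\<lambda>a2.
           return_pmf (if a2 then m' else m))))
       else return_pmf m))))"

end

theory Submission
  imports Defs
begin



lemma nn_swap_pmf:
  "(\<integral>\<^sup>+x. \<integral>\<^sup>+y. f x y \<partial>measure_pmf B \<partial>measure_pmf A) = (\<integral>\<^sup>+y. \<integral>\<^sup>+x. f x y \<partial>measure_pmf A \<partial>measure_pmf B)"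
proof -
  have "(\<integral>\<^sup>+x. \<integral>\<^sup>+y. f x y \<partial>measure_pmf B \<partial>measure_pmf A)
      = (\<integral>\<^sup>+z. case_prod f z \<partial>measure_pmf (bind_pmf A (\<lambda>x. bind_pmf B (\<lambda>y. return_pmf (x,y)))))"
    by simp
  also have "\<dots> = (\<integral>\<^sup>+z. case_prod f z \<partial>measure_pmf (bind_pmf B (\<lambda>y. bind_pmf A (\<lambda>x. return_pmf (x,y)))))"
    by (subst bind_commute_pmf) rule
  also have "\<dots> = (\<integral>\<^sup>+y. \<integral>\<^sup>+x. f x y \<partial>measure_pmf A \<partial>measure_pmf B)" by simp
  finally show ?thesis .
qed

lemma db_stationary:
  fixes p :: "'a pmf"
  assumes "\<And>x y. pmf p x * pmf (K x) y = pmf p y * pmf (K y) x"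
  shows "bind_pmf p K = p"
proof (rule pmf_eqI)
  fix y
  have "ennreal (pmf (bind_pmf p K) y) = (\<integral>\<^sup>+x. ennreal (pmf p x) * ennreal (pmf (K x) y) \<partial>count_space UNIV)"
    by (simp add: ennreal_pmf_bind nn_integral_measure_pmf)
  also have "\<dots> = (\<integral>\<^sup>+x. ennreal (pmf p y) * ennreal (pmf (K y) x) \<partial>count_space UNIV)"
    by (intro nn_integral_cong) (simp add: ennreal_mult'[symmetric] assms)
  also have "\<dots> = ennreal (pmf p y) * (\<integral>\<^sup>+x. ennreal (pmf (K y) x) \<partial>count_space UNIV)"
    by (simp add: nn_integral_cmult)
  also have "\<dots> = ennreal (pmf p y)" by (simp add: nn_integral_pmf)
  finally show "pmf (bind_pmf p K) y = pmf p y" by simp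
qed

lemma swap4:
  "(\<integral>\<^sup>+a. \<integral>\<^sup>+b. \<integral>\<^sup>+c. \<integral>\<^sup>+d. f a b c d \<partial>measure_pmf (D c) \<partial>measure_pmf C \<partial>measure_pmf (B a) \<partial>measure_pmf A)
 = (\<integral>\<^sup>+c. \<integral>\<^sup>+d. \<integral>\<^sup>+a. \<integral>\<^sup>+b. f a b c d \<partial>measure_pmf (B a) \<partial>measure_pmf A \<partial>measure_pmf (D c) \<partial>measure_pmf C)"
proof -
  have "(\<integral>\<^sup>+a. \<integral>\<^sup>+b. \<integral>\<^sup>+c. \<integral>\<^sup>+d. f a b c d \<partial>measure_pmf (D c) \<partial>measure_pmf C \<partial>measure_pmf (B a) \<partial>measure_pmf A)
    = (\<integral>\<^sup>+a. \<integral>\<^sup>+c. \<integral>\<^sup>+b. \<integral>\<^sup>+d. f a b c d \<partial>measure_pmf (D c) \<partial>measure_pmf (B a) \<partial>measure_pmf C \<partial>measure_pmf A)"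
    by (intro nn_integral_cong nn_swap_pmf)
  also have "\<dots> = (\<integral>\<^sup>+c. \<integral>\<^sup>+a. \<integral>\<^sup>+b. \<integral>\<^sup>+d. f a b c d \<partial>measure_pmf (D c) \<partial>measure_pmf (B a) \<partial>measure_pmf A \<partial>measure_pmf C)"
    by (rule nn_swap_pmf)
  also have "\<dots> = (\<integral>\<^sup>+c. \<integral>\<^sup>+a. \<integral>\<^sup>+d. \<integral>\<^sup>+b. f a b c d \<partial>measure_pmf (B a) \<partial>measure_pmf (D c) \<partial>measure_pmf A \<partial>measure_pmf C)"
    by (intro nn_integral_cong nn_swap_pmf)
  also have "\<dots> = (\<integral>\<^sup>+c. \<integral>\<^sup>+d. \<integral>\<^sup>+a. \<integral>\<^sup>+b. f a b c d \<partial>measure_pmf (B a) \<partial>measure_pmf A \<partial>measure_pmf (D c) \<partial>measure_pmf C)"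
    by (intro nn_integral_cong nn_swap_pmf)
  finally show ?thesis .
qed

lemma min_ratio: "(a::real) \<ge> 0 \<Longrightarrow> b \<ge> 0 \<Longrightarrow> a * min 1 (b / a) = min a b"
  by (cases "a = 0") (auto simp: min_def field_simps)

lemma step_val:
  assumes "x \<noteq> y"
  shows "ennreal (pmf (da_rgmjmcmc_step p qS qo qr x) y) =
    (\<integral>\<^sup>+S'. \<integral>\<^sup>+mk'. \<integral>\<^sup>+S. \<integral>\<^sup>+mk.
       ennreal (pmf (qr S' mk') y * min 1 (pmf p y / pmf p x) * min 1 (pmf (qr S mk) x / pmf (qr S' mk') y))
     \<partial>measure_pmf (qo S y) \<partial>measure_pmf (qS y) \<partial>measure_pmf (qo S' x) \<partial>measure_pmf (qS x))"
proof -
  define G where "G S' mk' m' = (\<integral>\<^sup>+a1. ennreal (pmf (if a1 then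
         bind_pmf (qS m') (\<lambda>S.
         bind_pmf (qo S m') (\<lambda>mk.
         bind_pmf (bernoulli_pmf (min 1 (pmf (qr S mk) x / pmf (qr S' mk') m'))) (\<lambda>a2.
           return_pmf (if a2 then m' else x))))
       else return_pmf x) y) \<partial>measure_pmf (bernoulli_pmf (min 1 (pmf p m' / pmf p x))))" for S' mk' m'
  have 1: "ennreal (pmf (da_rgmjmcmc_step p qS qo qr x) y) =
     (\<integral>\<^sup>+S'. \<integral>\<^sup>+mk'. \<integral>\<^sup>+m'. G S' mk' m' \<partial>measure_pmf (qr S' mk') \<partial>measure_pmf (qo S' x) \<partial>measure_pmf (qS x))"
    unfolding da_rgmjmcmc_step_def G_def by (simp add: ennreal_pmf_bind)
  have G0: "G S' mk' m' = 0" if "m' \<noteq> y" for S' mk' m'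
    unfolding G_def using that assms
    by (intro nn_integral_zero') (auto simp: pmf_eq_0_set_pmf)
  have 2: "(\<integral>\<^sup>+m'. G S' mk' m' \<partial>measure_pmf (qr S' mk')) = ennreal (pmf (qr S' mk') y) * G S' mk' y" for S' mk'
  proof -
    have "(\<integral>\<^sup>+m'. G S' mk' m' \<partial>measure_pmf (qr S' mk')) = (\<integral>\<^sup>+m'. G S' mk' y * indicator {y} m' \<partial>measure_pmf (qr S' mk'))"
      by (intro nn_integral_cong) (auto simp: G0 split: split_indicator)
    also have "\<dots> = G S' mk' y * emeasure (measure_pmf (qr S' mk')) {y}"
      by (simp add: nn_integral_cmult_indicator)
    finally show ?thesis by (simp add: emeasure_pmf_single mult.commute)
  qed
  have 3: "G S' mk' y = ennreal (min 1 (pmf p y / pmf p x)) * (\<integral>\<^sup>+S. \<integral>\<^sup>+mk. ennreal (min 1 (pmf (qr S mk) x / pmf (qr S' mk') y))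
     \<partial>measure_pmf (qo S y) \<partial>measure_pmf (qS y))" for S' mk'
    unfolding G_def using assms by (simp add: ennreal_pmf_bind mult.commute)
  show ?thesis
    unfolding 1 2 3
    by (simp add: nn_integral_cmult[symmetric] ennreal_mult'[symmetric] mult.assoc)
qed


lemma db_ennreal:
  assumes "x \<noteq> y"
  shows "ennreal (pmf p x) * ennreal (pmf (da_rgmjmcmc_step p qS qo qr x) y) =
    (\<integral>\<^sup>+S'. \<integral>\<^sup>+mk'. \<integral>\<^sup>+S. \<integral>\<^sup>+mk.
       ennreal (min (pmf p x) (pmf p y) * min (pmf (qr S' mk') y) (pmf (qr S mk) x))
     \<partial>measure_pmf (qo S y) \<partial>measure_pmf (qS y) \<partial>measure_pmf (qo S' x) \<partial>measure_pmf (qS x))"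
proof -
  have e: "pmf p x * (pmf (qr S' mk') y * min 1 (pmf p y / pmf p x) * min 1 (pmf (qr S mk) x / pmf (qr S' mk') y))
     = min (pmf p x) (pmf p y) * min (pmf (qr S' mk') y) (pmf (qr S mk) x)" for S' mk' S mk
  proof -
    have "pmf p x * (pmf (qr S' mk') y * min 1 (pmf p y / pmf p x) * min 1 (pmf (qr S mk) x / pmf (qr S' mk') y))
      = (pmf p x * min 1 (pmf p y / pmf p x)) * (pmf (qr S' mk') y * min 1 (pmf (qr S mk) x / pmf (qr S' mk') y))"
      by (simp add: algebra_simps)
    also have "\<dots> = min (pmf p x) (pmf p y) * min (pmf (qr S' mk') y) (pmf (qr S mk) x)"
      by (simp add: min_ratio)
    finally show ?thesis .
  qed
  show ?thesis
    unfolding step_val[OF assms]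
    by (simp add: nn_integral_cmult[symmetric] ennreal_mult'[symmetric] e)
qed

theorem theorem3:
  fixes p :: "'m pmf"
    and qS :: "'m \<Rightarrow> 's pmf"
    and qo :: "'s \<Rightarrow> 'm \<Rightarrow> 'm pmf"
    and qr :: "'s \<Rightarrow> 'm \<Rightarrow> 'm pmf"
  shows "bind_pmf p (da_rgmjmcmc_step p qS qo qr) = p"
proof (rule db_stationary)
  fix x y
  show "pmf p x * pmf (da_rgmjmcmc_step p qS qo qr x) y = pmf p y * pmf (da_rgmjmcmc_step p qS qo qr y) x"
  proof (cases "x = y")
    case False
    have "ennreal (pmf p x) * ennreal (pmf (da_rgmjmcmc_step p qS qo qr x) y)
        = ennreal (pmf p y) * ennreal (pmf (da_rgmjmcmc_step p qS qo qr y) x)"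
      unfolding db_ennreal[OF False] db_ennreal[OF False[symmetric]]
      by (subst swap4) (simp add: min.commute)
    then show ?thesis by (simp add: ennreal_mult'[symmetric])
  qed simp
qed

end
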